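(* Let $\mathcal{C}$ be a chordal $d$-uniform clutter on $[n]$ and let $\mathbf{e}$ and $\mathbf{e}'$ be two simplicial orders of $\mathcal{C}$. Then the simplicial multisets associated with $\mathbf{e}$ and $\mathbf{e}'$ coincide. In particular, all simplicial orders of $\mathcal{C}$ have the same length.
   Context: A $d$-uniform clutter $\mathcal{C}$ on $[n]$ is a set of $d$-element subsets of $[n]$. A $(d-1)$-subset $e$ is a submaximal circuit of $\mathcal{C}$ if $e\subset F$ for some $F\in\mathcal{C}$. A subset $V\subseteq[n]$ is a clique of $\mathcal{C}$ if every $d$-subset of $V$ belongs to $\mathcal{C}$. For a $(d-1)$-subset $e$, $\mathrm{N}_{\mathcal{C}}(e)=\{c\in[n]: e\cup\{c\}\in\mathcal{C}\}$ and $\mathrm{N}_{\mathcal{C}}[e]=e\cup\mathrm{N}_{\mathcal{C}}(e)$; $e$ is simplicial in $\mathcal{C}$ if it is a submaximal circuit and $\mathrm{N}_{\mathcal{C}}[e]$ is a clique. Deletion: $\mathcal{C}\setminus e=\{F\in\mathcal{C}: e\not\subset F\}$; $\mathcal{C}_{e_1\cdots e_i}$ denotes successive deletion of $e_1,\ldots,e_i$. A simplicial order of $\mathcal{C}$ is a sequence $e_1,\ldots,e_r$ with $e_1$ simplicial in $\mathcal{C}$, $e_i$ simplicial in $\mathcal{C}_{e_1\cdots e_{i-1}}$ for $i>1$, and $\mathcal{C}_{e_1\cdots e_r}=\emptyset$; $\mathcal{C}$ is chordal if it has a simplicial order. The simplicial multiset of the order is the multiset $\{N_1,\ldots,N_r\}$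 with $N_1=|\mathrm{N}_{\mathcal{C}}(e_1)|$, $N_i=|\mathrm{N}_{\mathcal{C}_{e_1\cdots e_{i-1}}}(e_i)|$ for $i>1$. *)

theory Defs
  imports Main "HOL-Library.Multiset"
begin

definition uniform_clutter :: "nat \<Rightarrow> nat \<Rightarrow> nat set set \<Rightarrow> bool" where
  "uniform_clutter n d C \<longleftrightarrow> (\<forall>F\<in>C. F \<subseteq> {1..n} \<and> card F = d)"

definition submaximal_circuit :: "nat \<Rightarrow> nat set set \<Rightarrow> nat set \<Rightarrow> bool" where
  "submaximal_circuit d C e \<longleftrightarrow> card e = d - 1 \<and> finite e \<and> (\<exists>F\<in>C. e \<subset> F)"

definition is_clique :: "nat \<Rightarrow> nat \<Rightarrow> nat set set \<Rightarrow> nat set \<Rightarrow> bool" where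
  "is_clique n d C V \<longleftrightarrow> V \<subseteq> {1..n} \<and> (\<forall>S. S \<subseteq> V \<and> card S = d \<longrightarrow> S \<in> C)"

definition nbhd :: "nat \<Rightarrow> nat set set \<Rightarrow> nat set \<Rightarrow> nat set" where
  "nbhd n C e = {c \<in> {1..n}. e \<union> {c} \<in> C}"

definition closed_nbhd :: "nat \<Rightarrow> nat set set \<Rightarrow> nat set \<Rightarrow> nat set" where
  "closed_nbhd n C e = e \<union> nbhd n C e"

definition simplicial :: "nat \<Rightarrow> nat \<Rightarrow> nat set set \<Rightarrow> nat set \<Rightarrow> bool" where
  "simplicial n d C e \<longleftrightarrow> submaximal_circuit d C e \<and> is_clique n d C (closed_nbhd n C e)"

definition delete :: "nat set set \<Rightarrow> nat set \<Rightarrow> nat set set" where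
  "delete C e = {F \<in> C. \<not> e \<subseteq> F}"

fun simplicial_order :: "nat \<Rightarrow> nat \<Rightarrow> nat set set \<Rightarrow> nat set list \<Rightarrow> bool" where
  "simplicial_order n d C [] \<longleftrightarrow> C = {}"
| "simplicial_order n d C (e # es) \<longleftrightarrow>
     simplicial n d C e \<and> simplicial_order n d (delete C e) es"

definition chordal :: "nat \<Rightarrow> nat \<Rightarrow> nat set set \<Rightarrow> bool" where
  "chordal n d C \<longleftrightarrow> (\<exists>es. simplicial_order n d C es)"

fun simplicial_seq :: "nat \<Rightarrow> nat set set \<Rightarrow> nat set list \<Rightarrow> nat list" where
  "simplicial_seq n C [] = []"
| "simplicial_seq n C (e # es) = card (nbhd n C e) # simplicial_seq n (delete C e) es"

definition simplicial_multiset :: "nat \<Rightarrow> nat set set \<Rightarrow> nat set list \<Rightarrow> nat multiset" where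
  "simplicial_multiset n C es = mset (simplicial_seq n C es)"

end

theory Submission
  imports Defs
begin

definition gsum :: "nat multiset \<Rightarrow> nat \<Rightarrow> nat" where
  "gsum M j = (\<Sum>x\<in>#M. x choose j)"

lemma gsum_plus: "gsum (A + B) j = gsum A j + gsum B j"
  by (simp add: gsum_def)

lemma gsum_rep: "gsum (replicate_mset c m) j = c * (m choose j)"
  by (induction c) (auto simp: gsum_def)

lemma gsum_top:
  assumes "\<forall>x\<in>#M. x \<le> m"
  shows "gsum M m = count M m"
  using assms
proof (induction M)
  case empty then show ?case by (simp add: gsum_def)
next
  case (add x M)
  then show ?case by (auto simp: gsum_def binomial_eq_0)
qed

lemma mset_det_aux:
  "\<forall>M M'. (\<forall>x\<in>#M. 1 \<le> x \<and> x \<le> b) \<longrightarrow> (\<forall>x\<in>#M'. 1 \<le> x \<and> x \<le> b) \<longrightarrow>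
     (\<forall>j\<ge>1. gsum M j = gsum M' j) \<longrightarrow> M = M'"
proof (induction b)
  case 0
  then show ?case by (metis le_zero_eq multiset_nonemptyE not_one_le_zero)
next
  case (Suc b)
  show ?case
  proof (intro allI impI)
    fix M M' :: "nat multiset"
    let ?m = "Suc b"
    assume a: "\<forall>x\<in>#M. 1 \<le> x \<and> x \<le> ?m" and a': "\<forall>x\<in>#M'. 1 \<le> x \<and> x \<le> ?m"
      and g: "\<forall>j\<ge>1. gsum M j = gsum M' j"
    define M1 where "M1 = filter_mset (\<lambda>x. x \<noteq> ?m) M"
    define M1' where "M1' = filter_mset (\<lambda>x. x \<noteq> ?m) M'"
    have dM: "M = M1 + replicate_mset (count M ?m) ?m"
      unfolding M1_def using multiset_partition[where M=M and P="\<lambda>x. x \<noteq> ?m"] filter_eq_replicate_mset[where D=M and x="?m"]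
      by simp
    have dM': "M' = M1' + replicate_mset (count M' ?m) ?m"
      unfolding M1'_def using multiset_partition[where M=M' and P="\<lambda>x. x \<noteq> ?m"] filter_eq_replicate_mset[where D=M' and x="?m"]
      by simp
    have c: "count M ?m = count M' ?m"
      using g gsum_top[of M ?m] gsum_top[of M' ?m] a a' by auto
    have "\<forall>j\<ge>1. gsum M1 j = gsum M1' j"
    proof (intro allI impI)
      fix j :: nat assume "1 \<le> j"
      then have "gsum M j = gsum M' j" using g by auto
      moreover have "gsum M j = gsum M1 j + gsum (replicate_mset (count M ?m) ?m) j"
        by (subst dM) (rule gsum_plus)
      moreover have "gsum M' j = gsum M1' j + gsum (replicate_mset (count M' ?m) ?m) j"
        by (subst dM') (rule gsum_plus)
      ultimately show "gsum M1 j = gsum M1' j" using c by simp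
    qed
    moreover have "\<forall>x\<in>#M1. 1 \<le> x \<and> x \<le> b" using a unfolding M1_def by auto
    moreover have "\<forall>x\<in>#M1'. 1 \<le> x \<and> x \<le> b" using a' unfolding M1'_def by auto
    ultimately have "M1 = M1'" using Suc by blast
    then show "M = M'" using dM dM' c by simp
  qed
qed

lemma mset_det:
  assumes "\<forall>x\<in>#M. 1 \<le> x" "\<forall>x\<in>#M'. 1 \<le> x" "\<forall>j\<ge>1. gsum M j = gsum M' j"
  shows "M = M'"
proof -
  define b where "b = Max (set_mset (M + M'))"
  have "\<forall>x\<in>#M. 1 \<le> x \<and> x \<le> b" "\<forall>x\<in>#M'. 1 \<le> x \<and> x \<le> b"
    using assms unfolding b_def by auto
  then show ?thesis using mset_det_aux assms(3) by blast
qed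

definition cliques :: "nat \<Rightarrow> nat \<Rightarrow> nat set set \<Rightarrow> nat \<Rightarrow> nat set set" where
  "cliques n d C k = {V. card V = k \<and> is_clique n d C V}"

lemma cliques_finite: "finite (cliques n d C k)"
proof -
  have "cliques n d C k \<subseteq> Pow {1..n}" by (auto simp: cliques_def is_clique_def)
  then show ?thesis by (rule finite_subset) simp
qed

lemma uc_delete: "uniform_clutter n d C \<Longrightarrow> uniform_clutter n d (delete C e)"
  by (auto simp: uniform_clutter_def delete_def)

lemma cliques_empty:
  assumes "1 \<le> j"
  shows "cliques n d {} (d - 1 + j) = {}"
proof (rule ccontr)
  assume "cliques n d {} (d - 1 + j) \<noteq> {}"
  then obtain V where V: "card V = d - 1 + j" "is_clique n d {} V" by (auto simp: cliques_def)
  have fin: "finite V" using V(1) assms by (metis card.infinite add_is_0 not_one_le_zero)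
  have "d \<le> card V" using V(1) assms by simp
  then obtain S where "S \<subseteq> V" "card S = d" using obtain_subset_with_card_n by metis
  then show False using V(2) by (auto simp: is_clique_def)
qed

lemma simp_facts:
  assumes uc: "uniform_clutter n d C" and s: "simplicial n d C e"
  shows "finite e" "card e = d - 1" "1 \<le> d" "e \<subseteq> {1..n}"
    "\<And>c. c \<in> nbhd n C e \<Longrightarrow> c \<notin> e"
    "finite (nbhd n C e)" "nbhd n C e \<noteq> {}"
proof -
  show fe: "finite e" and ce: "card e = d - 1" using s by (auto simp: simplicial_def submaximal_circuit_def)
  obtain F where F: "F \<in> C" "e \<subset> F" using s by (auto simp: simplicial_def submaximal_circuit_def)
  have F2: "F \<subseteq> {1..n}" "card F = d" using uc F(1) by (auto simp: uniform_clutter_def)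
  have fF: "finite F" using F2(1) finite_subset by blast
  have lt: "card e < card F" using F(2) fF psubset_card_mono by blast
  then show d1: "1 \<le> d" using F2 by simp
  show "e \<subseteq> {1..n}" using F F2 by auto
  show nn: "\<And>c. c \<in> nbhd n C e \<Longrightarrow> c \<notin> e"
  proof
    fix c assume "c \<in> nbhd n C e" "c \<in> e"
    then have "e \<in> C" by (auto simp: nbhd_def insert_absorb)
    then have "card e = d" using uc by (auto simp: uniform_clutter_def)
    then show False using ce d1 by simp
  qed
  show "finite (nbhd n C e)" by (auto simp: nbhd_def)
  obtain c where c: "c \<in> F" "c \<notin> e" using F(2) by auto
  have sub: "e \<union> {c} \<subseteq> F" using c F(2) by auto
  have "card (e \<union> {c}) = d" using c fe ce d1 by simp
  then have "e \<union> {c} = F" using sub fF F2 card_subset_eq by metis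
  then have "c \<in> nbhd n C e" using F c F2 by (auto simp: nbhd_def)
  then show "nbhd n C e \<noteq> {}" by auto
qed

lemma cliques_split:
  assumes uc: "uniform_clutter n d C" and s: "simplicial n d C e" and j: "1 \<le> j"
  shows "cliques n d C (d - 1 + j) =
     cliques n d (delete C e) (d - 1 + j) \<union> (\<lambda>S. e \<union> S) ` {S. S \<subseteq> nbhd n C e \<and> card S = j}"
    (is "?L = ?A \<union> ?B")
proof -
  note f = simp_facts[OF uc s]
  show ?thesis
  proof
    show "?L \<subseteq> ?A \<union> ?B"
    proof
      fix V assume "V \<in> ?L"
      then have V: "card V = d - 1 + j" "is_clique n d C V" by (auto simp: cliques_def)
      have fin: "finite V" using V(1) j by (metis card.infinite add_is_0 not_one_le_zero)
      show "V \<in> ?A \<union> ?B"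
      proof (cases "e \<subseteq> V")
        case True
        define S where "S = V - e"
        have "S \<subseteq> nbhd n C e"
        proof
          fix c assume c: "c \<in> S"
          have "c \<in> {1..n}" using c V(2) by (auto simp: S_def is_clique_def)
          moreover have "e \<union> {c} \<subseteq> V" using c True by (auto simp: S_def)
          moreover have "card (e \<union> {c}) = d" using c f S_def by auto
          ultimately show "c \<in> nbhd n C e" using V(2) by (auto simp: nbhd_def is_clique_def)
        qed
        moreover have "card S = j" using V(1) True f fin by (simp add: S_def card_Diff_subset)
        moreover have "V = e \<union> S" using True by (auto simp: S_def)
        ultimately show ?thesis by blast
      next
        case False
        have "is_clique n d (delete C e) V"
          using V(2) False by (auto simp: is_clique_def delete_def)
        then show ?thesis using V by (auto simp: cliques_def)
      qed
    qed
  next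
    show "?A \<union> ?B \<subseteq> ?L"
    proof
      fix V assume "V \<in> ?A \<union> ?B"
      then show "V \<in> ?L"
      proof
        assume "V \<in> ?A"
        then show ?thesis by (auto simp: cliques_def is_clique_def delete_def)
      next
        assume "V \<in> ?B"
        then obtain S where S: "S \<subseteq> nbhd n C e" "card S = j" "V = e \<union> S" by auto
        have fS: "finite S" using S(1) f(6) finite_subset by blast
        have dis: "e \<inter> S = {}" using S(1) f(5) by auto
        have "card V = d - 1 + j" using S fS f dis by (simp add: card_Un_disjoint)
        moreover have "V \<subseteq> closed_nbhd n C e" using S by (auto simp: closed_nbhd_def)
        moreover have "is_clique n d C (closed_nbhd n C e)" using s by (simp add: simplicial_def)
        ultimately show ?thesis by (auto simp: cliques_def is_clique_def)
      qed
    qed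
  qed
qed

lemma cliques_card_step:
  assumes uc: "uniform_clutter n d C" and s: "simplicial n d C e" and j: "1 \<le> j"
  shows "card (cliques n d C (d - 1 + j)) =
     card (cliques n d (delete C e) (d - 1 + j)) + (card (nbhd n C e) choose j)"
proof -
  note f = simp_facts[OF uc s]
  let ?A = "cliques n d (delete C e) (d - 1 + j)"
  let ?T = "{S. S \<subseteq> nbhd n C e \<and> card S = j}"
  let ?B = "(\<lambda>S. e \<union> S) ` ?T"
  have inj: "inj_on (\<lambda>S. e \<union> S) ?T"
  proof (rule inj_onI)
    fix S T assume "S \<in> ?T" "T \<in> ?T" "e \<union> S = e \<union> T"
    moreover have "e \<inter> S = {}" "e \<inter> T = {}" using calculation f(5) by auto
    ultimately show "S = T" by blast
  qed
  have cB: "card ?B = card (nbhd n C e) choose j"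
    using card_image[OF inj] n_subsets[OF f(6)] by simp
  have dis: "?A \<inter> ?B = {}"
  proof (rule ccontr)
    assume "?A \<inter> ?B \<noteq> {}"
    then obtain V where V: "V \<in> ?A" "e \<subseteq> V" by auto
    have cV: "card V = d - 1 + j" and cl: "is_clique n d (delete C e) V" using V by (auto simp: cliques_def)
    have fin: "finite V" using cV j by (metis card.infinite add_is_0 not_one_le_zero)
    have "card e < card V" using cV f j by simp
    then have "\<not> V \<subseteq> e" using card_mono[OF f(1), of V] by linarith
    then obtain c where c: "c \<in> V" "c \<notin> e" by blast
    have "e \<union> {c} \<subseteq> V" "card (e \<union> {c}) = d" using c V(2) f by auto
    then have "e \<union> {c} \<in> delete C e" using cl by (auto simp: is_clique_def)
    then show False by (auto simp: delete_def)
  qed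
  have fB: "finite ?B" using f(6) by simp
  show ?thesis
    using cliques_split[OF uc s j] card_Un_disjoint[OF cliques_finite fB dis] cB by simp
qed

lemma gsum_add_mset: "gsum (add_mset x M) j = (x choose j) + gsum M j"
  by (simp add: gsum_def)

lemma gsum_cons: "gsum (mset (x # xs)) j = (x choose j) + gsum (mset xs) j"
  by (simp add: gsum_def)

lemma main_ind:
  "\<forall>C. uniform_clutter n d C \<longrightarrow> simplicial_order n d C es \<longrightarrow>
     (\<forall>j\<ge>1. card (cliques n d C (d - 1 + j)) = gsum (mset (simplicial_seq n C es)) j) \<and>
     (\<forall>x\<in>set (simplicial_seq n C es). 1 \<le> x)"
proof (induction es)
  case Nil
  then show ?case using cliques_empty by (auto simp: gsum_def)
next
  case (Cons e es)
  show ?case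
  proof (intro allI impI)
    fix C assume uc: "uniform_clutter n d C" and so: "simplicial_order n d C (e # es)"
    have s: "simplicial n d C e" and so': "simplicial_order n d (delete C e) es" using so by auto
    note IH = Cons[rule_format, OF uc_delete[OF uc] so']
    note f = simp_facts[OF uc s]
    have "1 \<le> card (nbhd n C e)" using f(6,7) by (simp add: Suc_le_eq card_gt_0_iff)
    then show "(\<forall>j\<ge>1. card (cliques n d C (d - 1 + j)) = gsum (mset (simplicial_seq n C (e # es))) j) \<and>
     (\<forall>x\<in>set (simplicial_seq n C (e # es)). 1 \<le> x)"
      using IH cliques_card_step[OF uc s] by (simp add: gsum_add_mset add.commute)
  qed
qed

lemma len_seq: "length (simplicial_seq n C es) = length es"
  by (induction es arbitrary: C) auto

theorem corollary2p2:
  fixes n d :: nat and C :: "nat set set" and es es' :: "nat set list"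
  assumes "uniform_clutter n d C"
    and "chordal n d C"
    and "simplicial_order n d C es"
    and "simplicial_order n d C es'"
  shows "simplicial_multiset n C es = simplicial_multiset n C es' \<and> length es = length es'"
proof -
  note a = main_ind[rule_format, OF assms(1,3)] and b = main_ind[rule_format, OF assms(1,4)]
  have eq: "mset (simplicial_seq n C es) = mset (simplicial_seq n C es')"
    by (rule mset_det) (use a b in auto)
  then have "length (simplicial_seq n C es) = length (simplicial_seq n C es')"
    by (metis size_mset)
  then show ?thesis using eq by (simp add: simplicial_multiset_def len_seq)
qed

end
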